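(* Let $q=3^m$ with $m\ge1$. Then $\#\{x\in\mathbb{F}_q^*:\ x,\,x+1,\,x-1\in C_0\}\le \frac{q+2\sqrt{q}+9}{8}$.
   Context: $C_0$ denotes the set of nonzero squares in $\mathbb{F}_q^*$. *)

theory Defs
  imports Complex_Main
begin

definition nonzero_squares :: "'a::field set" where
  "nonzero_squares = {x. x \<noteq> 0 \<and> (\<exists>y. y ^ 2 = x)}"

end

theory Submission
  imports Defs
begin


definition sq :: "'a::field \<Rightarrow> bool" where "sq x \<longleftrightarrow> (\<exists>y. y ^ 2 = x)"
definition chi :: "'a::field \<Rightarrow> int" where
  "chi x = (if x = 0 then 0 else if sq x then 1 else -1)"

lemma nzs_iff: "x \<in> nonzero_squares \<longleftrightarrow> x \<noteq> 0 \<and> sq x"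
  by (simp add: nonzero_squares_def sq_def)

lemma sum_shift:
  fixes f :: "'a::{ab_group_add,finite} \<Rightarrow> 'b::comm_monoid_add"
  shows "(\<Sum>x\<in>UNIV. f (x + a)) = (\<Sum>x\<in>UNIV. f x)"
  by (rule sum.reindex_bij_witness[of _ "\<lambda>x. x - a" "\<lambda>x. x + a"]) auto

lemma char_zero_card:
  "of_nat (card (UNIV :: 'a::{field,finite} set)) = (0::'a)"
proof -
  have "(\<Sum>x\<in>(UNIV::'a set). x) = (\<Sum>x\<in>UNIV. x + 1)"
    by (rule sum_shift[symmetric])
  also have "\<dots> = (\<Sum>x\<in>UNIV. x) + of_nat (card (UNIV::'a set))"
    by (simp add: sum.distrib)
  finally show ?thesis by simp
qed

lemma three_zero:
  assumes "card (UNIV :: 'a::{field,finite} set) = 3 ^ m"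
  shows "(3::'a) = 0"
proof -
  have "(of_nat (3^m)::'a) = 0" using char_zero_card[where 'a='a] assms by simp
  then have "(3::'a)^m = 0" by simp
  then show ?thesis by simp
qed

lemma two_nz:
  assumes "(3::'a::field) = 0" shows "(2::'a) \<noteq> 0"
proof
  assume "(2::'a) = 0"
  have "(3::'a) = 2 + 1" by simp
  with assms \<open>2 = 0\<close> show False by simp
qed

lemma card_roots:
  fixes h :: "'a::{field,finite}"
  assumes two: "(2::'a) \<noteq> 0"
  shows "int (card {y. y ^ 2 = h}) = 1 + chi h"
proof (cases "h = 0")
  case True
  then have "{y::'a. y ^ 2 = h} = {0}" by auto
  then show ?thesis using True by (simp add: chi_def)
next
  case False
  show ?thesis
  proof (cases "sq h")
    case True
    then obtain y where y: "y ^ 2 = h" by (auto simp: sq_def)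
    then have "y \<noteq> 0" using False by auto
    have "z ^ 2 = h \<longleftrightarrow> z = y \<or> z = - y" for z
    proof
      assume "z ^ 2 = h"
      then have "(z - y) * (z + y) = 0" using y by (simp add: algebra_simps power2_eq_square)
      then have "z - y = 0 \<or> z + y = 0" by simp
      then show "z = y \<or> z = - y" by (metis eq_neg_iff_add_eq_0 right_minus_eq)
    qed (use y in auto)
    then have "{z. z ^ 2 = h} = {y, -y}" by auto
    moreover have "y \<noteq> - y"
    proof
      assume "y = - y" then have "2 * y = 0" by simp
      then show False using two \<open>y \<noteq> 0\<close> by simp
    qed
    ultimately show ?thesis using True False by (simp add: chi_def)
  next
    case nsq: False
    then have "{z. z ^ 2 = h} = {}" by (auto simp: sq_def)
    then show ?thesis using nsq False by (simp add: chi_def)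
  qed
qed

lemma fiber_sum:
  fixes f :: "'a::finite \<Rightarrow> 'b"
  assumes "finite B"
  shows "(\<Sum>h\<in>B. card {y. f y = h}) = card {y. f y \<in> B}"
proof -
  have "finite B \<or> True" by simp
  have eq: "{y. f y \<in> B} = (\<Union>h\<in>B \<inter> range f. {y. f y = h})" by auto
  have "card (\<Union>h\<in>B \<inter> range f. {y. f y = h}) = (\<Sum>h\<in>B \<inter> range f. card {y. f y = h})"
    by (intro card_UN_disjoint) (auto simp: assms)
  then have "card {y. f y \<in> B} = (\<Sum>h\<in>B \<inter> range f. card {y. f y = h})"
    using eq by simp
  also have "\<dots> = (\<Sum>h\<in>B. card {y. f y = h})"
    by (rule sum.mono_neutral_left) (auto simp: assms)
  finally show ?thesis by simp
qed

lemma sum_chi: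
  assumes two: "(2::'a::{field,finite}) \<noteq> 0"
  shows "(\<Sum>h\<in>(UNIV::'a set). chi h) = 0"
proof -
  have "(\<Sum>h\<in>(UNIV::'a set). int (card {y. y ^ 2 = h})) = int (card {y::'a. y ^ 2 \<in> UNIV})"
    using fiber_sum[of "UNIV::'a set" "\<lambda>y. y ^ 2"] by (metis finite of_nat_sum)
  also have "\<dots> = int (card (UNIV::'a set))" by simp
  finally have "(\<Sum>h\<in>(UNIV::'a set). 1 + chi h) = int (card (UNIV::'a set))"
    using card_roots[OF two] by simp
  then show ?thesis by (simp add: sum.distrib)
qed

lemma card_sq_nsq:
  assumes two: "(2::'a::{field,finite}) \<noteq> 0"
  shows "card {x::'a. x \<noteq> 0 \<and> sq x} = card {x::'a. x \<noteq> 0 \<and> \<not> sq x}"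
proof -
  have "(\<Sum>h\<in>(UNIV::'a set). chi h) = (\<Sum>h::'a\<in>UNIV. (of_bool (h \<noteq> 0 \<and> sq h) :: int) - of_bool (h \<noteq> 0 \<and> \<not> sq h))"
    by (rule sum.cong[OF refl]) (simp add: chi_def)
  also have "\<dots> = (\<Sum>h::'a\<in>UNIV. (of_bool (h \<noteq> 0 \<and> sq h) :: int)) - (\<Sum>h::'a\<in>UNIV. of_bool (h \<noteq> 0 \<and> \<not> sq h))"
    by (rule sum_subtractf)
  finally have "(\<Sum>h\<in>(UNIV::'a set). chi h) = (\<Sum>h::'a\<in>UNIV. (of_bool (h \<noteq> 0 \<and> sq h) :: int)) - (\<Sum>h::'a\<in>UNIV. of_bool (h \<noteq> 0 \<and> \<not> sq h))" .
  moreover have "(\<Sum>h\<in>(UNIV::'a set). (of_bool (h \<noteq> 0 \<and> sq h) :: int)) = int (card {x::'a. x \<noteq> 0 \<and> sq x})"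
    using sum_of_bool_eq[of "UNIV::'a set" "\<lambda>h. h \<noteq> 0 \<and> sq h"] by simp
  moreover have "(\<Sum>h\<in>(UNIV::'a set). (of_bool (h \<noteq> 0 \<and> \<not> sq h) :: int)) = int (card {x::'a. x \<noteq> 0 \<and> \<not> sq x})"
    using sum_of_bool_eq[of "UNIV::'a set" "\<lambda>h. h \<noteq> 0 \<and> \<not> sq h"] by simp
  ultimately have "int (card {x::'a. x \<noteq> 0 \<and> sq x}) = int (card {x::'a. x \<noteq> 0 \<and> \<not> sq x})"
    using sum_chi[OF two] by linarith
  then show ?thesis by simp
qed

lemma sq_mult: "sq a \<Longrightarrow> sq b \<Longrightarrow> sq (a * b)"
  unfolding sq_def by (metis power_mult_distrib)

lemma sq_inv: "sq a \<Longrightarrow> sq (inverse a)"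
  unfolding sq_def by (metis power_inverse)

lemma sq_nsq_mult:
  fixes a b :: "'a::field"
  assumes "sq a" "a \<noteq> 0" "\<not> sq b" shows "\<not> sq (a * b)"
proof
  assume "sq (a * b)"
  then have "sq (inverse a * (a * b))" using sq_mult[OF sq_inv[OF assms(1)]] by blast
  moreover have "inverse a * (a * b) = b" using assms(2) by (simp add: mult.assoc[symmetric])
  ultimately show False using assms by simp
qed

lemma nsq_nsq_mult:
  fixes a b :: "'a::{field,finite}"
  assumes two: "(2::'a) \<noteq> 0"
    and a: "a \<noteq> 0" "\<not> sq a" and b: "b \<noteq> 0" "\<not> sq b"
  shows "sq (a * b)"
proof -
  let ?S = "{x::'a. x \<noteq> 0 \<and> sq x}" and ?N = "{x::'a. x \<noteq> 0 \<and> \<not> sq x}"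
  have sub: "(\<lambda>s. a * s) ` ?S \<subseteq> ?N"
  proof -
    have hN: "a * s \<in> ?N" if s: "s \<noteq> 0" "sq s" for s :: 'a
    proof -
      have "\<not> sq (a * s)"
      proof
        assume "sq (a * s)"
        then have "sq (a * s * inverse s)" using sq_mult[OF _ sq_inv[OF s(2)]] by blast
        moreover have "a * s * inverse s = a" using s(1) by (simp add: mult.assoc)
        ultimately show False using a by simp
      qed
      then show ?thesis using a s by simp
    qed
    show ?thesis by (rule image_subsetI) (use hN a(1) in auto)
  qed
  have "card ((\<lambda>s. a * s) ` ?S) = card ?S"
    by (rule card_image) (use a in \<open>auto intro: inj_onI\<close>)
  also have "\<dots> = card ?N" using card_sq_nsq[OF two] .
  finally have "(\<lambda>s. a * s) ` ?S = ?N"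
    by (intro card_subset_eq sub) auto
  then have "b \<in> (\<lambda>s. a * s) ` ?S" using b by auto
  then obtain s where s: "s \<noteq> 0" "sq s" "b = a * s" by auto
  have "sq (a * a)" unfolding sq_def by (metis power2_eq_square)
  then show ?thesis using s sq_mult[of "a*a" s] by (simp add: mult.assoc)
qed

lemma chi_mult:
  fixes a b :: "'a::{field,finite}"
  assumes two: "(2::'a) \<noteq> 0"
  shows "chi (a * b) = chi a * chi b"
proof (cases "a = 0 \<or> b = 0")
  case True then show ?thesis by (auto simp: chi_def)
next
  case False
  then have nz: "a \<noteq> 0" "b \<noteq> 0" by auto
  show ?thesis
  proof (cases "sq a"; cases "sq b")
    assume "sq a" "sq b" then show ?thesis using nz sq_mult[of a b] by (simp add: chi_def)
  next
    assume "sq a" "\<not> sq b" then show ?thesis using nz sq_nsq_mult[of a b] by (simp add: chi_def)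
  next
    assume "\<not> sq a" "sq b" then show ?thesis using nz sq_nsq_mult[of b a] by (simp add: chi_def mult.commute)
  next
    assume "\<not> sq a" "\<not> sq b" then show ?thesis using nz nsq_nsq_mult[OF two, of a b] by (simp add: chi_def)
  qed
qed



definition LL :: "'a::field \<Rightarrow> 'a" where "LL x = x ^ 3 - x"

lemma LL_add:
  assumes three: "(3::'a::field) = 0"
  shows "LL (x + y) = LL x + LL (y::'a)"
proof -
  have "(x + y) ^ 3 = x ^ 3 + y ^ 3 + 3 * (x ^ 2 * y + x * y ^ 2)"
    by (simp add: algebra_simps power2_eq_square power3_eq_cube)
  then show ?thesis using three by (simp add: LL_def)
qed

lemma LL_neg: "LL (- x) = - LL (x::'a::field)"
  by (simp add: LL_def power3_eq_cube)

lemma LL_diff: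
  assumes three: "(3::'a::field) = 0"
  shows "LL (x - y) = LL x - LL (y::'a)"
  using LL_add[OF three, of x "-y"] LL_neg[of y] by simp

lemma H_add: "(3::'a::field) = 0 \<Longrightarrow> a \<in> range LL \<Longrightarrow> b \<in> range LL \<Longrightarrow> a + b \<in> range (LL::'a \<Rightarrow> 'a)"
proof -
  assume t: "(3::'a) = 0" and "a \<in> range LL" "b \<in> range LL"
  then obtain x y where "a = LL x" "b = LL y" by auto
  then have "a + b = LL (x + y)" using LL_add[OF t] by simp
  then show ?thesis by simp
qed

lemma H_diff: "(3::'a::field) = 0 \<Longrightarrow> a \<in> range LL \<Longrightarrow> b \<in> range LL \<Longrightarrow> a - b \<in> range (LL::'a \<Rightarrow> 'a)"
proof -
  assume t: "(3::'a) = 0" and "a \<in> range LL" "b \<in> range LL"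
  then obtain x y where "a = LL x" "b = LL y" by auto
  then have "a - b = LL (x - y)" using LL_diff[OF t] by simp
  then show ?thesis by simp
qed

lemma H_neg: "a \<in> range LL \<Longrightarrow> - a \<in> range (LL::'a::field \<Rightarrow> 'a)"
proof -
  assume "a \<in> range LL"
  then obtain x where "a = LL x" by auto
  then have "- a = LL (- x)" by (simp add: LL_neg)
  then show ?thesis by simp
qed

lemma H_zero: "(0::'a::field) \<in> range LL"
proof -
  have "LL (0::'a) = 0" by (simp add: LL_def)
  then show ?thesis by (metis rangeI)
qed

lemma LL_zero_iff: "LL x = 0 \<longleftrightarrow> x = 0 \<or> x = 1 \<or> x = (-1::'a::field)"
proof -
  have "LL x = x * (x - 1) * (x + 1)" by (simp add: LL_def algebra_simps power3_eq_cube)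
  then show ?thesis by (auto simp: eq_neg_iff_add_eq_0)
qed

lemma LL_fiber:
  fixes x0 :: "'a::{field,finite}"
  assumes three: "(3::'a) = 0"
  shows "card {x. LL x = LL x0} = 3"
proof -
  have two: "(2::'a) \<noteq> 0" using two_nz[OF three] .
  have "LL x = LL x0 \<longleftrightarrow> x = x0 \<or> x = x0 + 1 \<or> x = x0 - 1" for x
  proof -
    have "LL x = LL x0 \<longleftrightarrow> LL (x - x0) = 0" using LL_diff[OF three, of x x0] by simp
    also have "\<dots> \<longleftrightarrow> x - x0 = 0 \<or> x - x0 = 1 \<or> x - x0 = -1" by (rule LL_zero_iff)
    also have "\<dots> \<longleftrightarrow> x = x0 \<or> x = x0 + 1 \<or> x = x0 - 1" by (auto simp: algebra_simps)
    finally show ?thesis .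
  qed
  then have "{x. LL x = LL x0} = {x0, x0 + 1, x0 - 1}" by auto
  moreover have "x0 + 1 \<noteq> x0 - 1"
  proof
    assume "x0 + 1 = x0 - 1"
    then have "(2::'a) = 0" by (simp add: algebra_simps)
    with two show False by simp
  qed
  ultimately show ?thesis by simp
qed

lemma card_H:
  assumes three: "(3::'a::{field,finite}) = 0"
  shows "card (UNIV::'a set) = 3 * card (range (LL::'a \<Rightarrow> 'a))"
proof -
  have "(\<Sum>h\<in>range (LL::'a\<Rightarrow>'a). card {y. LL y = h}) = card {y::'a. LL y \<in> range LL}"
    by (rule fiber_sum) simp
  moreover have "(\<Sum>h\<in>range (LL::'a\<Rightarrow>'a). card {y. LL y = h}) = (\<Sum>h\<in>range (LL::'a\<Rightarrow>'a). 3)"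
    by (rule sum.cong) (auto simp: LL_fiber[OF three])
  ultimately show ?thesis by simp
qed

lemma T_sum:
  assumes three: "(3::'a::{field,finite}) = 0"
  shows "(\<Sum>x\<in>(UNIV::'a set). chi (LL x)) = 3 * (\<Sum>h\<in>range (LL::'a \<Rightarrow> 'a). chi h)"
proof -
  have "(\<Sum>x\<in>(UNIV::'a set). chi (LL x)) = (\<Sum>h\<in>range LL. \<Sum>x\<in>{x::'a\<in>UNIV. LL x = h}. chi (LL x))"
    using sum.image_gen[of "UNIV::'a set" "\<lambda>x. chi (LL x)" LL] by simp
  also have "\<dots> = (\<Sum>h\<in>range (LL::'a \<Rightarrow> 'a). 3 * chi h)"
  proof (rule sum.cong[OF refl])
    fix h assume "h \<in> range (LL::'a \<Rightarrow> 'a)"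
    then obtain x0 where h: "h = LL x0" by auto
    have "(\<Sum>x\<in>{x::'a\<in>UNIV. LL x = h}. chi (LL x)) = (\<Sum>x\<in>{x. LL x = LL x0}. chi h)"
      using h by (intro sum.cong) auto
    also have "\<dots> = 3 * chi h" using LL_fiber[OF three, of x0] by simp
    finally show "(\<Sum>x\<in>{x::'a\<in>UNIV. LL x = h}. chi (LL x)) = 3 * chi h" .
  qed
  finally show ?thesis by (simp add: sum_distrib_left)
qed

lemma H_chi:
  assumes two: "(2::'a::{field,finite}) \<noteq> 0"
  shows "(\<Sum>h\<in>range (LL::'a \<Rightarrow> 'a). chi h) = int (card {y::'a. y ^ 2 \<in> range LL}) - int (card (range (LL::'a \<Rightarrow> 'a)))"
proof -
  have "int (card {y::'a. y ^ 2 \<in> range LL}) = (\<Sum>h\<in>range (LL::'a \<Rightarrow> 'a). int (card {y. y ^ 2 = h}))"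
    using fiber_sum[of "range (LL::'a\<Rightarrow>'a)" "\<lambda>y. y ^ 2"] by (metis finite of_nat_sum)
  also have "\<dots> = (\<Sum>h\<in>range (LL::'a \<Rightarrow> 'a). 1 + chi h)"
    using card_roots[OF two] by simp
  also have "\<dots> = int (card (range (LL::'a \<Rightarrow> 'a))) + (\<Sum>h\<in>range (LL::'a \<Rightarrow> 'a). chi h)"
    by (simp add: sum.distrib)
  finally show ?thesis by simp
qed



lemma card_pairs:
  fixes P :: "'a::finite \<Rightarrow> 'a \<Rightarrow> bool"
  shows "card {(y, z). P y z} = (\<Sum>y\<in>UNIV. card {z. P y z})"
proof -
  have "{(y, z). P y z} = (SIGMA y:UNIV. {z. P y z})" by auto
  then show ?thesis by simp
qed

lemma coset_card:
  fixes H :: "'a::{ab_group_add,finite} set"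
  shows "card {x. x - w \<in> H} = card H"
proof -
  have "{x. x - w \<in> H} = (\<lambda>h. h + w) ` H" by (auto simp: image_iff algebra_simps) (metis diff_add_cancel)
  moreover have "inj_on (\<lambda>h. h + w) H" by (auto intro: inj_onI)
  ultimately show ?thesis by (simp add: card_image)
qed

lemma second_moment:
  assumes three: "(3::'a::{field,finite}) = 0"
  shows "(3 * real (card {y::'a. y ^ 2 \<in> range LL}) - real (card (UNIV::'a set))) ^ 2 \<le> 4 * real (card (UNIV::'a set))"
proof -
  let ?H = "range (LL::'a \<Rightarrow> 'a)"
  define q where "q = card (UNIV::'a set)"
  define h where "h = card ?H"
  have two: "(2::'a) \<noteq> 0" using two_nz[OF three] .
  have qh: "q = 3 * h" unfolding q_def h_def by (rule card_H[OF three])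
  have Hadd: "a \<in> ?H \<Longrightarrow> b \<in> ?H \<Longrightarrow> a + b \<in> ?H" for a b using H_add[OF three] by blast
  have Hdiff: "a \<in> ?H \<Longrightarrow> b \<in> ?H \<Longrightarrow> a - b \<in> ?H" for a b using H_diff[OF three] by blast
  have H0: "0 \<in> ?H" by (rule H_zero)
  have "h > 0" unfolding h_def using H0 by (auto simp: card_gt_0_iff)
  have "?H \<noteq> UNIV"
  proof
    assume "?H = UNIV" then have "h = q" unfolding h_def q_def by simp
    with qh \<open>h > 0\<close> show False by simp
  qed
  then obtain c where c: "c \<notin> ?H" by auto
  define W where "W = {0, c, -c}"
  have W3: "card W = 3"
  proof -
    have "c \<noteq> 0" using c H0 by auto
    moreover have "c \<noteq> -c"
    proof
      assume "c = - c" then have "2 * c = 0" by simp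
      then show False using two \<open>c \<noteq> 0\<close> by simp
    qed
    ultimately show ?thesis unfolding W_def by auto
  qed
  have cnz: "c \<noteq> 0" using c H0 by auto
  have cnc: "c \<noteq> -c"
  proof
    assume "c = - c" then have "2 * c = 0" by simp
    then show False using two cnz by simp
  qed
  let ?C = "\<lambda>w. {x. x - w \<in> ?H}"
  have disj: "\<forall>w1\<in>W. \<forall>w2\<in>W. w1 \<noteq> w2 \<longrightarrow> ?C w1 \<inter> ?C w2 = {}"
  proof (intro ballI impI)
    fix w1 w2 assume w: "w1 \<in> W" "w2 \<in> W" "w1 \<noteq> w2"
    show "?C w1 \<inter> ?C w2 = {}"
    proof (rule ccontr)
      assume "?C w1 \<inter> ?C w2 \<noteq> {}"
      then obtain x where "x - w1 \<in> ?H" "x - w2 \<in> ?H" by auto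
      then have d: "w2 - w1 \<in> ?H" using Hdiff[of "x - w1" "x - w2"] by simp
      have "c \<in> ?H"
      proof -
        have "c + c + c = 3 * c" by (simp add: algebra_simps)
        then have "c + c + c = 0" using three by simp
        then have c2: "c + c = - c" by (simp add: eq_neg_iff_add_eq_0)
        then have c3: "- c - c = c" "c - - c = - c" by (simp_all add: minus_add[symmetric])
        from w have "w1 \<in> {0, c, -c}" "w2 \<in> {0, c, -c}" unfolding W_def by auto
        then have "w2 - w1 = c \<or> w2 - w1 = -c" using w(3) c3 by auto
        moreover have "-c \<in> ?H \<Longrightarrow> c \<in> ?H" using H_neg[of "-c"] by simp
        ultimately show ?thesis using d by auto
      qed
      then show False using c by simp
    qed
  qed
  have Cu: "(\<Union>w\<in>W. ?C w) = UNIV"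
  proof -
    have "card (\<Union>w\<in>W. ?C w) = (\<Sum>w\<in>W. card (?C w))"
      by (rule card_UN_disjoint) (use disj in auto)
    also have "\<dots> = (\<Sum>w\<in>W. h)" unfolding h_def by (simp add: coset_card)
    also have "\<dots> = q" using W3 qh by simp
    finally show "(\<Union>w\<in>W. ?C w) = UNIV" unfolding q_def
      by (intro card_subset_eq) auto
  qed
  define A where "A w = {y::'a. y ^ 2 - w \<in> ?H}" for w
  define Z where "Z w = card (A w)" for w
  have Adisj: "\<forall>w1\<in>W. \<forall>w2\<in>W. w1 \<noteq> w2 \<longrightarrow> A w1 \<inter> A w2 = {}"
    using disj unfolding A_def by blast
  have Au: "(\<Union>w\<in>W. A w) = UNIV"
  proof -
    have "y \<in> (\<Union>w\<in>W. A w)" for y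
    proof -
      have "y ^ 2 \<in> (\<Union>w\<in>W. ?C w)" using Cu by simp
      then show ?thesis unfolding A_def by auto
    qed
    then show ?thesis by auto
  qed
  have sumZ: "q = (\<Sum>w\<in>W. Z w)"
  proof -
    have "card (\<Union>w\<in>W. A w) = (\<Sum>w\<in>W. card (A w))"
      by (rule card_UN_disjoint) (use Adisj in auto)
    then show ?thesis using Au unfolding q_def Z_def by simp
  qed
  have key: "{z. y ^ 2 - z ^ 2 \<in> ?H} = A w" if "y \<in> A w" for y w
  proof -
    have yw: "y ^ 2 - w \<in> ?H" using that unfolding A_def by simp
    have "y ^ 2 - z ^ 2 \<in> ?H \<longleftrightarrow> z ^ 2 - w \<in> ?H" for z
    proof
      assume "y ^ 2 - z ^ 2 \<in> ?H"
      from Hdiff[OF yw this] show "z ^ 2 - w \<in> ?H" by simp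
    next
      assume "z ^ 2 - w \<in> ?H"
      from Hdiff[OF yw this] show "y ^ 2 - z ^ 2 \<in> ?H" by simp
    qed
    then show ?thesis unfolding A_def by auto
  qed
  have P1: "card {(y, z). y ^ 2 - z ^ 2 \<in> ?H} = (\<Sum>w\<in>W. Z w * Z w)"
  proof -
    have "card {(y, z). y ^ 2 - z ^ 2 \<in> ?H} = (\<Sum>y\<in>UNIV. card {z. y ^ 2 - z ^ 2 \<in> ?H})"
      by (rule card_pairs)
    also have "\<dots> = (\<Sum>y\<in>(\<Union>w\<in>W. A w). card {z. y ^ 2 - z ^ 2 \<in> ?H})"
      using Au by simp
    also have "\<dots> = (\<Sum>w\<in>W. \<Sum>y\<in>A w. card {z. y ^ 2 - z ^ 2 \<in> ?H})"
      by (rule sum.UNION_disjoint) (use Adisj in auto)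
    also have "\<dots> = (\<Sum>w\<in>W. \<Sum>y\<in>A w. Z w)"
      by (intro sum.cong refl) (simp add: key Z_def)
    also have "\<dots> = (\<Sum>w\<in>W. Z w * Z w)" unfolding Z_def by simp
    finally show ?thesis .
  qed
  have P2: "card {(y, z). y ^ 2 - z ^ 2 \<in> ?H} = card {(u, v). u * v \<in> ?H}"
  proof -
    define phi where "phi = (\<lambda>(y::'a, z::'a). (y - z, y + z))"
    have inj: "inj_on phi X" for X
    proof (rule inj_onI)
      fix p1 p2 assume "p1 \<in> X" "p2 \<in> X" "phi p1 = phi p2"
      obtain y z y' z' where p: "p1 = (y, z)" "p2 = (y', z')" by (cases p1, cases p2) auto
      have e1: "y - z = y' - z'" and e2: "y + z = y' + z'" using \<open>phi p1 = phi p2\<close> p unfolding phi_def by auto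
      have "(y - z) + (y + z) = (y' - z') + (y' + z')" using e1 e2 by simp
      then have "2 * y = 2 * y'" by (simp add: algebra_simps)
      then have "y = y'" using two by simp
      then have "z = z'" using e2 by simp
      then show "p1 = p2" using p \<open>y = y'\<close> by simp
    qed
    have img: "phi ` {(y, z). y ^ 2 - z ^ 2 \<in> ?H} = {(u, v). u * v \<in> ?H}"
    proof
      show "phi ` {(y, z). y ^ 2 - z ^ 2 \<in> ?H} \<subseteq> {(u, v). u * v \<in> ?H}"
      proof (rule subsetI)
        fix p assume "p \<in> phi ` {(y, z). y ^ 2 - z ^ 2 \<in> ?H}"
        then obtain y z where yz: "y ^ 2 - z ^ 2 \<in> ?H" "p = phi (y, z)" by auto
        moreover have "(y - z) * (y + z) = y ^ 2 - z ^ 2" by (simp add: algebra_simps power2_eq_square)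
        ultimately show "p \<in> {(u, v). u * v \<in> ?H}" unfolding phi_def by simp
      qed
    next
      show "{(u, v). u * v \<in> ?H} \<subseteq> phi ` {(y, z). y ^ 2 - z ^ 2 \<in> ?H}"
      proof (rule subsetI)
        fix p assume "p \<in> {(u, v). u * v \<in> ?H}"
        then obtain u v where uv: "u * v \<in> ?H" and p: "p = (u, v)" by (cases p) auto
        define y where "y = (u + v) / 2"
        define z where "z = (v - u) / 2"
        have "y - z = ((u + v) - (v - u)) / 2" unfolding y_def z_def by (rule diff_divide_distrib[symmetric])
        also have "(u + v) - (v - u) = 2 * u" by (simp add: algebra_simps mult_2)
        finally have "y - z = u" using two by simp
        have "y + z = ((u + v) + (v - u)) / 2" unfolding y_def z_def by (rule add_divide_distrib[symmetric])
        also have "(u + v) + (v - u) = 2 * v" by (simp add: algebra_simps mult_2)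
        finally have "y + z = v" using two by simp
        have "phi (y, z) = (u, v)" unfolding phi_def using \<open>y - z = u\<close> \<open>y + z = v\<close> by simp
        moreover have "y ^ 2 - z ^ 2 = (y - z) * (y + z)" by (simp add: algebra_simps power2_eq_square)
        ultimately show "p \<in> phi ` {(y, z). y ^ 2 - z ^ 2 \<in> ?H}" unfolding p
          using uv \<open>y - z = u\<close> \<open>y + z = v\<close> by (auto intro!: image_eqI[of _ _ "(y, z)"])
      qed
    qed
    show ?thesis using card_image[OF inj] img by metis
  qed
  have P3: "card {(u, v). u * v \<in> ?H} = q + (q - 1) * h"
  proof -
    have "card {(u, v). u * v \<in> ?H} = (\<Sum>u\<in>UNIV. card {v. u * v \<in> ?H})"
      by (rule card_pairs)
    also have "\<dots> = card {v. 0 * v \<in> ?H} + (\<Sum>u\<in>UNIV - {0}. card {v. u * v \<in> ?H})"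
      by (rule sum.remove) auto
    also have "\<dots> = q + (\<Sum>u::'a\<in>UNIV - {0}. h)"
    proof -
      have "card {v. 0 * v \<in> ?H} = q" using H0 unfolding q_def by simp
      moreover have "card {v. u * v \<in> ?H} = h" if "u \<noteq> 0" for u :: 'a
      proof -
        have "{v. u * v \<in> ?H} = (\<lambda>x. x / u) ` ?H"
        proof
          show "{v. u * v \<in> ?H} \<subseteq> (\<lambda>x. x / u) ` ?H"
          proof
            fix v assume "v \<in> {v. u * v \<in> ?H}"
            moreover have "v = (u * v) / u" using that by simp
            ultimately show "v \<in> (\<lambda>x. x / u) ` ?H" by blast
          qed
        qed (use that in auto)
        moreover have "inj_on (\<lambda>x. x / u) ?H" using that by (auto intro: inj_onI)
        ultimately show ?thesis unfolding h_def by (simp add: card_image)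
      qed
      ultimately show ?thesis by simp
    qed
    also have "\<dots> = q + (q - 1) * h" unfolding q_def by (simp add: card_Diff_subset)
    finally show ?thesis .
  qed
  have W_sum: "(\<Sum>w\<in>W. f w) = f 0 + f c + f (-c)" for f :: "'a \<Rightarrow> nat"
    unfolding W_def using cnz cnc by simp
  have e1: "q = Z 0 + Z c + Z (-c)" using sumZ W_sum by simp
  have e2: "Z 0 * Z 0 + Z c * Z c + Z (-c) * Z (-c) = q + (q - 1) * h"
    using P1 P2 P3 W_sum[of "\<lambda>w. Z w * Z w"] by simp
  have "q \<ge> 1" using qh \<open>h > 0\<close> by simp
  define a where "a = real (Z 0)"
  define b where "b = real (Z c)"
  define d where "d = real (Z (-c))"
  have r1: "real q = a + b + d" unfolding a_def b_def d_def using e1 by simp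
  have r2: "a * a + b * b + d * d = real q + (real q - 1) * (real q / 3)"
  proof -
    have "real (Z 0 * Z 0 + Z c * Z c + Z (-c) * Z (-c)) = real (q + (q - 1) * h)" using e2 by simp
    then show ?thesis unfolding a_def b_def d_def using qh \<open>q \<ge> 1\<close> by (simp add: of_nat_diff)
  qed
  have r3: "3 * (a * a + b * b + d * d) = 3 * (a + b + d) + (a + b + d - 1) * (a + b + d)"
    using r2 r1 by simp
  have sq0: "0 \<le> (b - d) * (b - d)" by simp
  have "(3 * a - (a + b + d)) * (3 * a - (a + b + d)) \<le> 4 * (a + b + d)"
    using sq0 r3 by (simp add: algebra_simps)
  then have "(3 * a - real q) ^ 2 \<le> 4 * real q" using r1 by (simp add: power2_eq_square)
  moreover have "a = real (card {y::'a. y ^ 2 \<in> range LL})" unfolding a_def Z_def A_def by simp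
  ultimately show ?thesis unfolding q_def by simp
qed



lemma chi_one: "chi (1::'a::field) = 1"
  by (simp add: chi_def sq_def) (metis power_one)

lemma chi_sq: "u \<noteq> 0 \<Longrightarrow> chi (u * u) = 1"
  by (simp add: chi_def sq_def) (metis power2_eq_square)

lemma pair_sum:
  fixes d :: "'a::{field,finite}"
  assumes two: "(2::'a) \<noteq> 0" and d: "d \<noteq> 0"
  shows "(\<Sum>u\<in>UNIV. chi u * chi (u + d)) = -1"
proof -
  have "(\<Sum>u\<in>UNIV. chi u * chi (u + d)) = chi (0::'a) * chi (0 + d) + (\<Sum>u\<in>UNIV - {0}. chi u * chi (u + d))"
    using sum.remove[of "UNIV::'a set" 0 "\<lambda>u. chi u * chi (u + d)"] by simp
  also have "\<dots> = (\<Sum>u\<in>UNIV - {0}. chi (1 + d / u))"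
  proof -
    have "chi u * chi (u + d) = chi (1 + d / u)" if "u \<noteq> 0" for u
    proof -
      have "u * (u + d) = (u * u) * (1 + d / u)" using that by (simp add: field_simps)
      then have "chi u * chi (u + d) = chi (u * u) * chi (1 + d / u)"
        using chi_mult[OF two] by metis
      then show ?thesis using chi_sq[OF that] by simp
    qed
    then show ?thesis by (simp add: chi_def)
  qed
  also have "\<dots> = (\<Sum>t::'a\<in>UNIV - {1}. chi t)"
  proof (rule sum.reindex_bij_witness[where j = "\<lambda>u. 1 + d / u" and i = "\<lambda>t. d / (t - 1)"])
    fix a :: 'a assume "a \<in> UNIV - {0}"
    then show "d / (1 + d / a - 1) = a" using d by simp
  next
    fix a :: 'a assume "a \<in> UNIV - {0}"
    then show "1 + d / a \<in> UNIV - {1}" using d by simp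
  next
    fix b :: 'a assume "b \<in> UNIV - {1}"
    then show "1 + d / (d / (b - 1)) = b" using d by simp
  next
    fix b :: 'a assume "b \<in> UNIV - {1}"
    then show "d / (b - 1) \<in> UNIV - {0}" using d by simp
  qed simp
  also have "\<dots> = (\<Sum>t::'a\<in>UNIV. chi t) - chi (1::'a)"
    using sum.remove[of "UNIV::'a set" 1 chi] by simp
  also have "\<dots> = -1" using sum_chi[OF two] chi_one[where 'a='a] by simp
  finally show ?thesis .
qed



theorem lemma5:
  assumes "(m::nat) \<ge> 1"
    and "card (UNIV :: 'a::{field,finite} set) = 3 ^ m"
  shows "real (card {x :: 'a. x \<noteq> 0 \<and> x \<in> nonzero_squares \<and> x + 1 \<in> nonzero_squares
                    \<and> x - 1 \<in> nonzero_squares})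
         \<le> (real (card (UNIV :: 'a set)) + 2 * sqrt (real (card (UNIV :: 'a set))) + 9) / 8"
proof -
  have three: "(3::'a) = 0" using three_zero[OF assms(2)] .
  have two: "(2::'a) \<noteq> 0" using two_nz[OF three] .
  define q where "q = card (UNIV :: 'a set)"
  define N where "N = {x :: 'a. x \<noteq> 0 \<and> x \<in> nonzero_squares \<and> x + 1 \<in> nonzero_squares
                    \<and> x - 1 \<in> nonzero_squares}"
  define f where "f x = (1 + chi x) * (1 + chi (x + 1)) * (1 + chi (x - 1))" for x :: 'a
  have chi_ge: "chi y \<ge> -1" for y :: 'a by (simp add: chi_def)
  have f_nn: "f x \<ge> 0" for x
    unfolding f_def using chi_ge[of x] chi_ge[of "x+1"] chi_ge[of "x - 1"] by simp
  have f_N: "f x = 8" if "x \<in> N" for x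
    using that unfolding f_def N_def by (simp add: nzs_iff chi_def)
  have "int (8 * card N) = (\<Sum>x\<in>N. f x)" using f_N by simp
  also have "\<dots> \<le> (\<Sum>x\<in>UNIV. f x)" by (rule sum_mono2) (use f_nn in auto)
  finally have b1: "int (8 * card N) \<le> (\<Sum>x\<in>UNIV. f x)" .
  have f_exp: "f x = 1 + chi x + chi (x + 1) + chi (x + -1) + chi x * chi (x + 1) + chi x * chi (x + -1)
      + chi (x + 1) * chi ((x + 1) + -2) + chi (LL x)" for x
  proof -
    have "chi x * chi (x + 1) * chi (x - 1) = chi (x * (x + 1) * (x - 1))"
      using chi_mult[OF two] by metis
    also have "x * (x + 1) * (x - 1) = LL x" by (simp add: LL_def algebra_simps power3_eq_cube)
    finally have "chi x * chi (x + 1) * chi (x - 1) = chi (LL x)" .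
    moreover have "(x + 1) + -2 = x - 1" by simp
    ultimately show ?thesis unfolding f_def by (simp add: algebra_simps)
  qed
  have s0: "(\<Sum>x\<in>(UNIV::'a set). chi x) = 0" by (rule sum_chi[OF two])
  have s1: "(\<Sum>x\<in>(UNIV::'a set). chi (x + 1)) = 0" using sum_shift[of "chi::'a \<Rightarrow> int" 1] s0 by simp
  have s2: "(\<Sum>x\<in>(UNIV::'a set). chi (x + -1)) = 0" using sum_shift[of "chi::'a \<Rightarrow> int" "-1"] s0 by simp
  have p1: "(\<Sum>x\<in>(UNIV::'a set). chi x * chi (x + 1)) = -1" by (rule pair_sum[OF two]) simp
  have p2: "(\<Sum>x\<in>(UNIV::'a set). chi x * chi (x + -1)) = -1" by (rule pair_sum[OF two]) simp
  have p3: "(\<Sum>x\<in>(UNIV::'a set). chi (x + 1) * chi ((x + 1) + -2)) = -1"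
  proof -
    have "(\<Sum>x\<in>(UNIV::'a set). chi (x + 1) * chi ((x + 1) + -2)) = (\<Sum>u\<in>(UNIV::'a set). chi u * chi (u + -2))"
      using sum_shift[of "\<lambda>u::'a. chi u * chi (u + -2)" 1] by simp
    also have "\<dots> = -1" by (rule pair_sum[OF two]) (use two in simp)
    finally show ?thesis .
  qed
  define Z where "Z = card {y::'a. y ^ 2 \<in> range LL}"
  define h where "h = card (range (LL::'a \<Rightarrow> 'a))"
  have qh: "q = 3 * h" unfolding q_def h_def by (rule card_H[OF three])
  have T: "(\<Sum>x\<in>(UNIV::'a set). chi (LL x)) = 3 * (int Z - int h)"
    using T_sum[OF three] H_chi[OF two] unfolding Z_def h_def by simp
  have "(\<Sum>x\<in>UNIV. f x) = int q - 3 + 3 * (int Z - int h)"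
    unfolding f_exp using s0 s1 s2 p1 p2 p3 T by (simp add: sum.distrib q_def)
  with b1 have b2: "real (8 * card N) \<le> real q - 3 + (3 * real Z - real q)"
    using qh by (simp add: of_int_le_iff[symmetric])
  have sm: "(3 * real Z - real q) ^ 2 \<le> 4 * real q"
    using second_moment[OF three] unfolding Z_def q_def by simp
  have "3 * real Z - real q \<le> \<bar>3 * real Z - real q\<bar>" by simp
  also have "\<dots> = sqrt ((3 * real Z - real q) ^ 2)" by simp
  also have "\<dots> \<le> sqrt (4 * real q)" using sm by (rule real_sqrt_le_mono)
  also have "\<dots> = 2 * sqrt (real q)" by (simp add: real_sqrt_mult)
  finally have "3 * real Z - real q \<le> 2 * sqrt (real q)" .
  with b2 have "8 * real (card N) \<le> real q + 2 * sqrt (real q) + 9" by simp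
  then show ?thesis unfolding N_def q_def by simp
qed

end
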